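(* If $q=p^{2r}$ where $p$ is an odd prime and $r\ge1$ is an integer, then $\chi(ER_q)\le 4\sqrt{q}+1$.
   Context: For a prime power $q$, $ER_q$ is the graph whose vertices are the points of $PG(2,q)$, i.e. the $1$-dimensional subspaces of $\mathbb{F}_q^3$, where distinct vertices $(x_0,x_1,x_2)$ and $(y_0,y_1,y_2)$ (homogeneous coordinates) are adjacent if and only if $x_0y_0+x_1y_1+x_2y_2=0$. $\chi$ denotes the chromatic number. *)

theory Defs
  imports Complex_Main "HOL-Computational_Algebra.Primes"
begin

definition scal3 :: "'a::field \<Rightarrow> 'a \<times> 'a \<times> 'a \<Rightarrow> 'a \<times> 'a \<times> 'a" where
  "scal3 c v = (case v of (x, y, z) \<Rightarrow> (c * x, c * y, c * z))"

definition dot3 :: "'a::field \<times> 'a \<times> 'a \<Rightarrow> 'a \<times> 'a \<times> 'a \<Rightarrow> 'a" where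
  "dot3 u v = (case u of (x0, x1, x2) \<Rightarrow> case v of (y0, y1, y2) \<Rightarrow> x0 * y0 + x1 * y1 + x2 * y2)"

definition PG2_points :: "('a::field \<times> 'a \<times> 'a) set set" where
  "PG2_points = {L. \<exists>v. v \<noteq> (0, 0, 0) \<and> L = range (\<lambda>c. scal3 c v)}"

definition ER_adj :: "('a::field \<times> 'a \<times> 'a) set \<Rightarrow> ('a \<times> 'a \<times> 'a) set \<Rightarrow> bool" where
  "ER_adj L M \<longleftrightarrow> L \<noteq> M \<and> (\<forall>u\<in>L. \<forall>v\<in>M. dot3 u v = 0)"

definition chromatic_number :: "'v set \<Rightarrow> ('v \<Rightarrow> 'v \<Rightarrow> bool) \<Rightarrow> nat" where
  "chromatic_number V E = (LEAST k. \<exists>c :: 'v \<Rightarrow> nat.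
      (\<forall>v\<in>V. c v < k) \<and> (\<forall>u\<in>V. \<forall>v\<in>V. E u v \<longrightarrow> c u \<noteq> c v))"

end

theory Submission
  imports Defs "HOL-Computational_Algebra.Polynomial" "HOL-Number_Theory.Residues"
begin

lemma fermat_ff:
  fixes a :: "'a::{field,finite}"
  shows "a ^ card (UNIV::'a set) = a"
proof (cases "a = 0")
  case True
  have "card (UNIV::'a set) > 0" by (simp add: finite_UNIV_card_ge_0)
  then show ?thesis using True by (simp add: power_0_left)
next
  case False
  define U where "U = (UNIV::'a set) - {0}"
  have fin: "finite U" by (simp add: U_def)
  have "prod (\<lambda>x. a * x) U = prod id U"
  proof -
    have "bij_betw (\<lambda>x. a * x) U U"
      by (rule bij_betwI[where g="\<lambda>x. x / a"]) (use False in \<open>auto simp: U_def\<close>)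
    then show ?thesis using prod.reindex_bij_betw[of "\<lambda>x. a * x" U U id] by simp
  qed
  hence "a ^ card U * prod id U = prod id U" by (simp add: prod.distrib)
  moreover have "prod id U \<noteq> 0" using fin by (simp add: U_def)
  ultimately have "a ^ card U = 1" by simp
  moreover have "card (UNIV::'a set) = Suc (card U)"
    unfolding U_def by (simp add: card_Diff_singleton card_gt_0_iff)
  ultimately show ?thesis by simp
qed


lemma card_sq_fibers:
  fixes K0 :: "'a::field set"
  assumes fin: "finite K0" and two: "(2::'a) \<noteq> 0" and neg: "\<And>x. x \<in> K0 \<Longrightarrow> -x \<in> K0"
    and nz: "0 \<notin> K0"
  shows "card K0 = 2 * card ((\<lambda>z. z * z) ` K0)"
proof -
  define S where "S = (\<lambda>z. z * z) ` K0"
  define F where "F = (\<lambda>y. {x \<in> K0. x * x = y})"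
  have fib: "card (F y) = 2" if "y \<in> S" for y
  proof -
    from that obtain z where z: "z \<in> K0" "y = z * z" by (auto simp: S_def)
    have "F y = {z, -z}"
    proof
      show "F y \<subseteq> {z, - z}"
      proof
        fix x assume "x \<in> F y"
        hence "x * x = z * z" using z by (simp add: F_def)
        hence "(x - z) * (x + z) = 0" by (simp add: algebra_simps)
        hence "x = z \<or> x = -z" by (metis add_eq_0_iff2 eq_iff_diff_eq_0 mult_eq_0_iff)
        thus "x \<in> {z, -z}" by blast
      qed
      show "{z, - z} \<subseteq> F y" using z neg by (auto simp: F_def)
    qed
    moreover have "z \<noteq> - z"
    proof
      assume "z = - z" hence "2 * z = 0" by (metis add_eq_0_iff mult_2)
      thus False using two z nz by auto
    qed
    ultimately show ?thesis by simp
  qed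
  have finS: "finite S" unfolding S_def using fin by simp
  have "K0 = (\<Union>y\<in>S. F y)" by (auto simp: S_def F_def)
  hence "card K0 = card (\<Union>y\<in>S. F y)" by simp
  also have "\<dots> = (\<Sum>y\<in>S. card (F y))"
  proof (rule card_UN_disjoint)
    show "finite S" by (rule finS)
    show "\<forall>y\<in>S. finite (F y)" using fin by (simp add: F_def)
    show "\<forall>y\<in>S. \<forall>y'\<in>S. y \<noteq> y' \<longrightarrow> F y \<inter> F y' = {}" by (auto simp: F_def)
  qed
  also have "\<dots> = (\<Sum>y\<in>S. 2)" using fib by (intro sum.cong) auto
  also have "\<dots> = 2 * card S" by simp
  finally show ?thesis by (simp add: S_def)
qed

fun scal :: "'a::field \<Rightarrow> 'a \<times> 'a \<times> 'a \<Rightarrow> 'a \<times> 'a \<times> 'a" where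
  "scal c (x, y, z) = (c * x, c * y, c * z)"

fun cross3 :: "'a::field \<times> 'a \<times> 'a \<Rightarrow> 'a \<times> 'a \<times> 'a \<Rightarrow> 'a \<times> 'a \<times> 'a" where
  "cross3 (a1, a2, a3) (b1, b2, b3) = (a2*b3 - a3*b2, a3*b1 - a1*b3, a1*b2 - a2*b1)"

fun Bf :: "'a::field \<times> 'a \<times> 'a \<Rightarrow> 'a \<times> 'a \<times> 'a \<Rightarrow> 'a" where
  "Bf (a1, b1, c1) (a2, b2, c2) = b1*b2 - 2*(a1*c2 + a2*c1)"

fun Jm :: "'a::field \<times> 'a \<times> 'a \<Rightarrow> 'a \<times> 'a \<times> 'a" where
  "Jm (a1, a2, a3) = (-2*a3, a2, -2*a1)"

fun dt :: "'a::field \<times> 'a \<times> 'a \<Rightarrow> 'a \<times> 'a \<times> 'a \<Rightarrow> 'a" where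
  "dt (a1, a2, a3) (b1, b2, b3) = a1*b1 + a2*b2 + a3*b3"

lemma par_ex:
  fixes a c :: "'a::field \<times> 'a \<times> 'a"
  assumes "cross3 a c = (0,0,0)" "c \<noteq> (0,0,0)"
  shows "\<exists>l. a = scal l c"
proof -
  obtain a1 a2 a3 c1 c2 c3 where a: "a = (a1,a2,a3)" and c: "c = (c1,c2,c3)" by (cases a, cases c) auto
  from assms a c have e1: "a2*c3 = a3*c2" and e2: "a3*c1 = a1*c3" and e3: "a1*c2 = a2*c1" by auto
  show ?thesis
  proof (cases "c1 = 0")
    case False
    show ?thesis
      by (rule exI[of _ "a1/c1"]) (use False e2 e3 in \<open>auto simp: a c field_simps\<close>)
  next
    case c1: True
    show ?thesis
    proof (cases "c2 = 0")
      case False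
      show ?thesis
        by (rule exI[of _ "a2/c2"]) (use False c1 e1 e3 in \<open>auto simp: a c field_simps\<close>)
    next
      case c2: True
      with c1 assms(2) c have c3: "c3 \<noteq> 0" by auto
      show ?thesis
        by (rule exI[of _ "a3/c3"]) (use c1 c2 c3 e1 e2 in \<open>auto simp: a c field_simps\<close>)
    qed
  qed
qed

lemma cross_scal_same: "cross3 (scal l c) (scal m c) = (0,0,0)"
  by (cases c) (auto simp: algebra_simps)

lemma perp_lemma:
  fixes a b u w :: "'a::field \<times> 'a \<times> 'a"
  assumes two: "(2::'a) \<noteq> 0"
    and h: "Bf a u = 0" "Bf a w = 0" "Bf b u = 0" "Bf b w = 0"
    and uw: "cross3 u w \<noteq> (0,0,0)"
  shows "cross3 a b = (0,0,0)"
proof -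
  have key: "cross3 (Jm x) (cross3 u w) = (0,0,0)" if "Bf x u = 0" "Bf x w = 0" for x :: "'a \<times> 'a \<times> 'a"
  proof -
    obtain x1 x2 x3 u1 u2 u3 w1 w2 w3 where x: "x = (x1,x2,x3)" and u: "u = (u1,u2,u3)" and w: "w = (w1,w2,w3)"
      by (cases x, cases u, cases w) auto
    have bu: "u2*x2 - 2*(x1*u3 + u1*x3) = 0" and bw: "w2*x2 - 2*(x1*w3 + w1*x3) = 0"
      using that x u w by (auto simp: algebra_simps)
    have "cross3 (Jm x) (cross3 u w) =
      (u1 * (w2*x2 - 2*(x1*w3 + w1*x3)) - w1 * (u2*x2 - 2*(x1*u3 + u1*x3)),
       u2 * (w2*x2 - 2*(x1*w3 + w1*x3)) - w2 * (u2*x2 - 2*(x1*u3 + u1*x3)),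
       u3 * (w2*x2 - 2*(x1*w3 + w1*x3)) - w3 * (u2*x2 - 2*(x1*u3 + u1*x3)))"
      by (simp add: x u w algebra_simps)
    then show ?thesis using bu bw by simp
  qed
  obtain l where l: "Jm a = scal l (cross3 u w)" using par_ex[OF key[OF h(1,2)] uw] by blast
  obtain m where m: "Jm b = scal m (cross3 u w)" using par_ex[OF key[OF h(3,4)] uw] by blast
  obtain c1 c2 c3 where c: "cross3 u w = (c1,c2,c3)" by (cases "cross3 u w") auto
  obtain a1 a2 a3 b1 b2 b3 where a: "a = (a1,a2,a3)" and b: "b = (b1,b2,b3)" by (cases a, cases b) auto
  from l c a have "-2*a3 = l*c1" "a2 = l*c2" "-2*a1 = l*c3" by auto
  hence la: "a1 = -(l*c3)/2" "a2 = l*c2" "a3 = -(l*c1)/2" using two by (simp_all add: field_simps; Groebner_Basis.algebra)+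
  from m c b have "-2*b3 = m*c1" "b2 = m*c2" "-2*b1 = m*c3" by auto
  hence lb: "b1 = -(m*c3)/2" "b2 = m*c2" "b3 = -(m*c1)/2" using two by (simp_all add: field_simps; Groebner_Basis.algebra)+
  show ?thesis using la lb a b by (simp add: field_simps)
qed


fun sig3 :: "('a \<Rightarrow> 'a) \<Rightarrow> 'a \<times> 'a \<times> 'a \<Rightarrow> 'a \<times> 'a \<times> 'a" where
  "sig3 f (a, b, c) = (f a, f b, f c)"

fun Lmap :: "'a::field \<Rightarrow> 'a \<Rightarrow> 'a \<times> 'a \<times> 'a \<Rightarrow> 'a \<times> 'a \<times> 'a" where
  "Lmap d c (a, b, g) = (a*d*d, d*(2*a*c + b), a*c*c + b*c + g)"

fun Linv :: "'a::field \<Rightarrow> 'a \<Rightarrow> 'a \<times> 'a \<times> 'a \<Rightarrow> 'a \<times> 'a \<times> 'a" where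
  "Linv d c (a, b, g) = (a/(d*d), b/d - 2*(a/(d*d))*c, g - (a/(d*d))*c*c - (b/d - 2*(a/(d*d))*c)*c)"

lemma Bf_Lmap: "Bf (Lmap d c Q) (Lmap d c R) = d*d * Bf Q R"
  by (cases Q; cases R) (simp add: algebra_simps)

lemma Linv_Lmap: "d \<noteq> 0 \<Longrightarrow> Linv d c (Lmap d c Q) = Q"
  by (cases Q) (simp add: field_simps)

lemma Linv_scal: "Linv d c (scal l Q) = scal l (Linv d c Q)"
  by (cases Q) (simp add: field_simps)

lemma Lmap_scal: "Lmap d c (scal l Q) = scal l (Lmap d c Q)"
  by (cases Q) (simp add: algebra_simps)

lemma cross_scal_self: "cross3 (scal l x) x = (0,0,0)"
  by (cases x) (simp add: algebra_simps)

lemma scal_0: "scal 0 x = (0,0,0)" by (cases x) simp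

lemma cross_lin:
  assumes lin: "\<And>l u. F (scal l u) = scal l (F u)" and c: "cross3 u w = (0,0,0)"
  shows "cross3 (F u) (F w) = (0,0,0)"
proof (cases "w = (0,0,0)")
  case True
  have "F w = (0,0,0)" using lin[of 0 w] True by (simp add: scal_0)
  thus ?thesis by (cases "F u") simp
next
  case False
  then obtain l where "u = scal l w" using par_ex[OF c] by blast
  hence "F u = scal l (F w)" using lin by simp
  thus ?thesis using cross_scal_self by simp
qed

lemma Bf_sym: "Bf a b = Bf b a" by (cases a; cases b) (simp add: algebra_simps)

fun Tm :: "'a::field \<Rightarrow> 'a \<times> 'a \<times> 'a \<Rightarrow> 'a \<times> 'a \<times> 'a" where
  "Tm i (a, b, g) = (b, a - g, -i*(a+g))"
fun Ti :: "'a::field \<Rightarrow> 'a \<Rightarrow> 'a \<times> 'a \<times> 'a \<Rightarrow> 'a \<times> 'a \<times> 'a" where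
  "Ti h i (v0, v1, v2) = (h*(v1 + i*v2), v0, h*(i*v2 - v1))"
lemma Bf_Ti: fixes i h :: "'a::field" assumes ii: "i*i = -1" and h: "h * 2 = 1"
  shows "Bf (Ti h i v) (Ti h i w) = dt v w"
proof -
  obtain v0 v1 v2 w0 w1 w2 where v: "v = (v0,v1,v2)" and w: "w = (w0,w1,w2)" by (cases v, cases w) auto
  show ?thesis unfolding v w using ii h by simp Groebner_Basis.algebra
qed
lemma Tm_Ti: fixes i h :: "'a::field" assumes ii: "i*i = -1" and h: "h * 2 = 1"
  shows "Tm i (Ti h i v) = v"
proof -
  obtain v0 v1 v2 where v: "v = (v0,v1,v2)" by (cases v) auto
  have "h * (v1 + i * v2) - h * (i * v2 - v1) = v1" using h by Groebner_Basis.algebra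
  moreover have "- i * (h * (v1 + i * v2) + h * (i * v2 - v1)) = v2" using h ii by Groebner_Basis.algebra
  ultimately show ?thesis unfolding v by simp
qed
lemma Tm_scal: "Tm i (scal l v) = scal l (Tm i v)" by (cases v) (simp add: algebra_simps)
lemma Tm_zero: "Tm i (0,0,0) = (0,0,0)" by simp
lemma scal3_eq: "scal3 c v = scal c v" by (cases v) (simp add: scal3_def)
lemma dot3_eq: "dot3 u v = dt u v" by (cases u; cases v) (simp add: dot3_def)
lemma dot3_sym: "dot3 u v = dot3 v u" by (cases u; cases v) (simp add: dot3_def algebra_simps)
lemma scal_scal: "scal c (scal l v) = scal (c * l) v" by (cases v) (simp add: algebra_simps)
lemma scal_1: "scal 1 v = v" by (cases v) simp
lemma ER_adj_sym: "ER_adj L M \<Longrightarrow> ER_adj M L"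
  unfolding ER_adj_def using dot3_sym by metis


locale ffq =
  fixes s :: nat and sg :: "'a::{field,finite} \<Rightarrow> 'a"
  assumes sg_def: "\<And>x. sg x = x ^ s"
  and fd: "\<And>x y::'a. (x + y) ^ s = x ^ s + y ^ s"
  and invol: "\<And>x::'a. (x ^ s) ^ s = x"
  and two: "(2::'a) \<noteq> 0"
  and cardq: "card (UNIV::'a set) = s * s"
  and s3: "3 \<le> s"
begin

lemma sg_add [simp]: "sg (x + y) = sg x + sg y" by (simp add: sg_def fd)
lemma sg_mult [simp]: "sg (x * y) = sg x * sg y" by (simp add: sg_def power_mult_distrib)
lemma sg_0 [simp]: "sg 0 = 0" using s3 by (simp add: sg_def)
lemma sg_1 [simp]: "sg 1 = 1" by (simp add: sg_def)
lemma sg_uminus [simp]: "sg (- x) = - sg x"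
proof -
  have "sg (x + - x) = 0" by simp
  hence "sg x + sg (-x) = 0" by (simp only: sg_add)
  thus ?thesis by (simp add: eq_neg_iff_add_eq_0 add.commute)
qed
lemma sg_diff [simp]: "sg (x - y) = sg x - sg y"
  using sg_add[of x "-y"] by simp
lemma sg_inverse [simp]: "sg (inverse x) = inverse (sg x)" by (simp add: sg_def power_inverse)
lemma sg_divide [simp]: "sg (x / y) = sg x / sg y" by (simp add: divide_inverse)
lemma sg_of_nat [simp]: "sg (of_nat k) = of_nat k"
  by (induction k) simp_all
lemma sg_numeral [simp]: "sg (numeral k) = numeral k"
  using sg_of_nat[of "numeral k"] by simp
lemma sg_sg [simp]: "sg (sg x) = x" by (simp add: sg_def invol)
lemma sg_eq0 [simp]: "sg x = 0 \<longleftrightarrow> x = 0"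
  by (metis sg_0 sg_sg)
lemma sg_inj: "sg x = sg y \<Longrightarrow> x = y" by (metis sg_sg)

lemma card_K: "card {x::'a. sg x = x} \<le> s"
proof -
  define P where "P = Polynomial.monom (1::'a) s + [:0, -1:]"
  have dP: "degree P = s"
    unfolding P_def using s3 by (subst degree_add_eq_left) (auto simp: Polynomial.degree_monom_eq)
  hence "P \<noteq> 0" using s3 by auto
  moreover have "{x::'a. sg x = x} = {x. poly P x = 0}"
    by (auto simp: P_def Polynomial.poly_monom sg_def)
  ultimately show ?thesis using card_poly_roots_bound[of P] dP by simp
qed

lemma omega_ex: "\<exists>w::'a. w \<noteq> 0 \<and> sg w = - w"
proof -
  have "\<exists>x::'a. sg x \<noteq> x"
  proof (rule ccontr)
    assume "\<not> ?thesis"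
    hence "(UNIV::'a set) = {x. sg x = x}" by auto
    hence "s * s \<le> s" using card_K cardq by simp
    moreover have "3 * s \<le> s * s" by (rule mult_right_mono[OF s3]) simp
    ultimately show False using s3 by linarith
  qed
  then obtain x :: 'a where "sg x \<noteq> x" by blast
  thus ?thesis by (intro exI[of _ "x - sg x"]) auto
qed

lemma sq_or:
  fixes w D :: 'a
  assumes w: "w \<noteq> 0" "sg w = - w" and D: "sg D = D"
  shows "\<exists>z. sg z = z \<and> (z * z = D \<or> z * z = w * w * D)"
proof (cases "D = 0")
  case True thus ?thesis by (intro exI[of _ 0]) simp
next
  case False
  define K0 where "K0 = {x::'a. sg x = x \<and> x \<noteq> 0}"
  define S where "S = (\<lambda>z. z * z) ` K0"
  define T where "T = (\<lambda>y. w * w * y) ` S"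
  have finK0: "finite K0" by simp
  have SK: "S \<subseteq> K0" unfolding S_def K0_def by auto
  have TK: "T \<subseteq> K0" unfolding T_def S_def K0_def using w by auto
  have cK0: "card K0 = 2 * card S" unfolding S_def
    by (rule card_sq_fibers) (auto simp: K0_def two)
  have cT: "card T = card S"
    unfolding T_def using w by (intro card_image inj_onI) simp
  have disj: "S \<inter> T = {}"
  proof (rule ccontr)
    assume "S \<inter> T \<noteq> {}"
    then obtain y where y: "y \<in> S" "y \<in> T" by blast
    from y(1) obtain z1 where z1: "z1 \<in> K0" "y = z1 * z1" unfolding S_def by blast
    from y(2) obtain y2 where y2: "y2 \<in> S" "y = w * w * y2" unfolding T_def by blast
    from y2(1) obtain z2 where z2: "z2 \<in> K0" "y2 = z2 * z2" unfolding S_def by blast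
    have zz: "z1 * z1 = w * w * (z2 * z2)" using z1 y2 z2 by simp
    have s1: "sg z1 = z1" "sg z2 = z2" "z2 \<noteq> 0" using z1 z2 unfolding K0_def by auto
    define k where "k = z1 / z2"
    have sk: "sg k = k" unfolding k_def using s1 by simp
    have "k * k = (z1 * z1) / (z2 * z2)" unfolding k_def by simp
    also have "\<dots> = w * w" using zz s1 by simp
    finally have "k * k = w * w" .
    hence "(w - k) * (w + k) = 0" by (simp add: algebra_simps)
    hence "w = k \<or> w = -k" by (metis add_eq_0_iff2 eq_iff_diff_eq_0 mult_eq_0_iff)
    hence "sg w = w" using sk by auto
    hence "w = - w" using w by simp
    hence "2 * w = 0" by (metis add_eq_0_iff mult_2)
    thus False using two w by simp
  qed
  have finS: "finite S" using finite_subset[OF SK finK0] .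
  have finT: "finite T" using finite_subset[OF TK finK0] .
  have "card (S \<union> T) = card K0"
    using card_Un_disjoint[OF finS finT disj] cK0 cT by simp
  hence ST: "S \<union> T = K0" using SK TK finK0 by (intro card_subset_eq) auto
  have "D \<in> K0" using False D by (simp add: K0_def)
  hence "D \<in> S \<or> D \<in> T" using ST by blast
  thus ?thesis
  proof
    assume "D \<in> S" then obtain z where "z \<in> K0" "D = z * z" unfolding S_def by blast
    thus ?thesis unfolding K0_def by auto
  next
    assume "D \<in> T" then obtain y where y: "y \<in> S" "D = w * w * y" unfolding T_def by blast
    then obtain z where z: "z \<in> K0" "y = z * z" unfolding S_def by blast
    have sz: "sg z = z" using z unfolding K0_def by auto
    show ?thesis
    proof (rule exI[of _ "w * w * z"], intro conjI disjI2)
      show "sg (w * w * z) = w * w * z" using sz w by simp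
      show "w * w * z * (w * w * z) = w * w * D" using z y by (simp add: algebra_simps)
    qed
  qed
qed

lemma sig3_sig3 [simp]: "sig3 sg (sig3 sg a) = a" by (cases a) simp
lemma Bf_sig3: "Bf (sig3 sg a) (sig3 sg b) = sg (Bf a b)" by (cases a; cases b) simp
lemma cross_sig3: "cross3 (sig3 sg a) (sig3 sg b) = sig3 sg (cross3 a b)" by (cases a; cases b) simp
lemma sig3_zero [simp]: "sig3 sg a = (0,0,0) \<longleftrightarrow> a = (0,0,0)" by (cases a) simp

definition inU0 :: "'a \<times> 'a \<times> 'a \<Rightarrow> bool" where
  "inU0 Q \<longleftrightarrow> Bf Q (sig3 sg Q) = 0"

lemma U0_match:
  assumes Q: "inU0 Q" and R: "inU0 R" and QR: "Bf Q R = 0"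
  shows "cross3 (sig3 sg Q) R = (0,0,0)"
proof (rule ccontr)
  assume nz: "cross3 (sig3 sg Q) R \<noteq> (0,0,0)"
  have "cross3 Q (sig3 sg R) = (0,0,0)"
  proof (rule perp_lemma[OF two _ _ _ _ nz])
    show "Bf Q (sig3 sg Q) = 0" using Q by (simp add: inU0_def)
    show "Bf Q R = 0" by (rule QR)
    show "Bf (sig3 sg R) (sig3 sg Q) = 0" using QR by (simp add: Bf_sig3 Bf_sym)
    show "Bf (sig3 sg R) R = 0" using R by (simp add: inU0_def Bf_sym)
  qed
  hence "sig3 sg (cross3 Q (sig3 sg R)) = (0,0,0)" by simp
  hence "cross3 (sig3 sg Q) R = (0,0,0)" by (simp add: cross_sig3[symmetric])
  thus False using nz by simp
qed

definition inS :: "'a \<Rightarrow> 'a \<Rightarrow> 'a \<times> 'a \<times> 'a \<Rightarrow> bool" where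
  "inS d c Q \<longleftrightarrow> inU0 (Lmap d c Q)"

lemma S_match:
  assumes d: "d \<noteq> 0" and Q: "inS d c Q" and R1: "inS d c R1" and R2: "inS d c R2"
    and B1: "Bf Q R1 = 0" and B2: "Bf Q R2 = 0" and Qnz: "Q \<noteq> (0,0,0)"
  shows "cross3 R1 R2 = (0,0,0)"
proof -
  let ?L = "Lmap d c"
  have c1: "cross3 (sig3 sg (?L Q)) (?L R1) = (0,0,0)"
    using U0_match[of "?L Q" "?L R1"] Q R1 B1 by (simp add: inS_def Bf_Lmap)
  have c2: "cross3 (sig3 sg (?L Q)) (?L R2) = (0,0,0)"
    using U0_match[of "?L Q" "?L R2"] Q R2 B2 by (simp add: inS_def Bf_Lmap)
  have "?L Q \<noteq> (0,0,0)"
  proof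
    assume "?L Q = (0,0,0)"
    hence "Linv d c (?L Q) = Linv d c (0,0,0)" by simp
    thus False using Linv_Lmap[OF d] Qnz by simp
  qed
  hence nz: "sig3 sg (?L Q) \<noteq> (0,0,0)" by simp
  have cr1: "cross3 (?L R1) (sig3 sg (?L Q)) = (0,0,0)"
    using c1 by (cases "?L R1"; cases "sig3 sg (?L Q)") (simp add: algebra_simps)
  have cr2: "cross3 (?L R2) (sig3 sg (?L Q)) = (0,0,0)"
    using c2 by (cases "?L R2"; cases "sig3 sg (?L Q)") (simp add: algebra_simps)
  obtain l where l: "?L R1 = scal l (sig3 sg (?L Q))" using par_ex[OF cr1 nz] by blast
  obtain m where m: "?L R2 = scal m (sig3 sg (?L Q))" using par_ex[OF cr2 nz] by blast
  have "cross3 (?L R1) (?L R2) = (0,0,0)"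
    unfolding l m using cross_scal_same by blast
  hence "cross3 (Linv d c (?L R1)) (Linv d c (?L R2)) = (0,0,0)"
    by (rule cross_lin[OF Linv_scal])
  thus ?thesis using Linv_Lmap[OF d] by simp
qed

lemma eight_nz: "(8::'a) \<noteq> 0"
proof -
  have e: "(2::'a) * (2 * 2) = 8" by simp
  show ?thesis using two by (metis mult_eq_0_iff e)
qed

lemma cover:
  fixes w a b g :: 'a
  assumes w: "w \<noteq> 0" "sg w = - w" and a: "a \<noteq> 0"
  shows "\<exists>t. sg t = t \<and> (inS 1 (w * t) (a, b, g) \<or> inS w t (a, b, g))"
proof -
  define A where "A = 8 * a * sg a"
  define B where "B = 4 * (a * sg b + sg a * b)"
  define C where "C = b * sg b + 2 * (a * sg g + sg a * g)"
  define D where "D = B * B - 4 * A * C"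
  define A' where "A' = - 8 * w * w * a * sg a"
  define B' where "B' = 4 * w * (a * sg b - sg a * b)"
  define C' where "C' = b * sg b - 2 * (a * sg g + sg a * g)"
  have sA: "sg A = A" unfolding A_def by (simp add: algebra_simps)
  have sB: "sg B = B" unfolding B_def by (simp add: algebra_simps)
  have sC: "sg C = C" unfolding C_def by (simp add: algebra_simps)
  have sD: "sg D = D" unfolding D_def using sA sB sC by simp
  have sA': "sg A' = A'" unfolding A'_def using w by (simp add: algebra_simps)
  have sB': "sg B' = B'" unfolding B'_def using w by (simp add: algebra_simps)
  have Anz: "A \<noteq> 0" unfolding A_def using a eight_nz by simp
  have A'nz: "A' \<noteq> 0" unfolding A'_def using a w eight_nz by simp
  have D': "B' * B' - 4 * A' * C' = w * w * D"
    unfolding A'_def B'_def C'_def D_def A_def B_def C_def by (simp add: algebra_simps)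
  have E2: "Bf (Lmap w t (a,b,g)) (sig3 sg (Lmap w t (a,b,g))) = - (w * w) * (A * t * t + B * t + C)"
    if "sg t = t" for t
    using that w unfolding A_def B_def C_def by (simp add: algebra_simps)
  have E1: "Bf (Lmap 1 (w * t) (a,b,g)) (sig3 sg (Lmap 1 (w * t) (a,b,g))) = A' * t * t + B' * t + C'"
    if "sg t = t" for t
    using that w unfolding A'_def B'_def C'_def by (simp add: algebra_simps)
  have root: "X * t * t + Y * t + Z = 0"
    if "X \<noteq> 0" "z * z = Y * Y - 4 * X * Z" "t = (z - Y) / (2 * X)" for X Y Z z t :: 'a
  proof -
    have z: "z = 2 * X * t + Y" using that two by (simp add: field_simps)
    have "(2 * X * t + Y) * (2 * X * t + Y) = Y * Y - 4 * X * Z" using that(2) z by simp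
    hence "(2 * 2 * X) * (X * t * t + Y * t + Z) = 0" by (simp add: algebra_simps)
    moreover have "(2 * 2 * X) \<noteq> 0" using that(1) two by (metis mult_eq_0_iff)
    ultimately show ?thesis by (metis mult_eq_0_iff)
  qed
  obtain z where z: "sg z = z" "z * z = D \<or> z * z = w * w * D" using sq_or[OF w sD] by blast
  from z(2) show ?thesis
  proof
    assume zD: "z * z = D"
    define t where "t = (z - B) / (2 * A)"
    have st: "sg t = t" unfolding t_def using z(1) sA sB by simp
    have "A * t * t + B * t + C = 0" by (rule root[OF Anz _ t_def]) (use zD D_def in simp)
    hence "inS w t (a,b,g)" unfolding inS_def inU0_def using E2[OF st] by simp
    thus ?thesis using st by blast
  next
    assume zD: "z * z = w * w * D"
    define t where "t = (z - B') / (2 * A')"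
    have st: "sg t = t" unfolding t_def using z(1) sA' sB' by simp
    have "A' * t * t + B' * t + C' = 0" by (rule root[OF A'nz _ t_def]) (use zD D' in simp)
    hence "inS 1 (w * t) (a,b,g)" unfolding inS_def inU0_def using E1[OF st] by simp
    thus ?thesis using st by blast
  qed
qed

lemma cover0: "inS d c (0, 0, g)"
  by (simp add: inS_def inU0_def)

definition rep :: "('a \<times> 'a \<times> 'a) set \<Rightarrow> 'a \<times> 'a \<times> 'a" where
  "rep L = (SOME v. v \<noteq> (0,0,0) \<and> L = range (\<lambda>c. scal3 c v))"

lemma rep: assumes "L \<in> PG2_points" shows "rep L \<noteq> (0,0,0) \<and> L = range (\<lambda>c. scal3 c (rep L))"
proof -
  have "\<exists>v. v \<noteq> (0,0,0) \<and> L = range (\<lambda>c. scal3 c v)" using assms by (simp add: PG2_points_def)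
  thus ?thesis unfolding rep_def by (rule someI_ex)
qed

lemma rep_in: assumes "L \<in> PG2_points" shows "rep L \<in> L"
proof -
  have "rep L = scal3 1 (rep L)" by (simp add: scal3_eq scal_1)
  thus ?thesis using rep[OF assms] by (metis rangeI)
qed

lemma adj_dot: "ER_adj L M \<Longrightarrow> L \<in> PG2_points \<Longrightarrow> M \<in> PG2_points \<Longrightarrow> dt (rep L) (rep M) = 0"
  unfolding ER_adj_def using rep_in dot3_eq by metis

lemma cross_eq:
  assumes L: "L \<in> PG2_points" and M: "M \<in> PG2_points" and c: "cross3 (rep L) (rep M) = (0,0,0)"
  shows "L = M"
proof -
  obtain l where l: "rep L = scal l (rep M)" using par_ex[OF c] rep[OF M] by blast
  have lnz: "l \<noteq> 0" using rep[OF L] l by (auto simp: scal_0)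
  have "range (\<lambda>c. scal3 c (rep L)) = range (\<lambda>c. scal3 c (rep M))"
  proof
    show "range (\<lambda>c. scal3 c (rep L)) \<subseteq> range (\<lambda>c. scal3 c (rep M))"
      by (auto simp: l scal3_eq scal_scal)
    show "range (\<lambda>c. scal3 c (rep M)) \<subseteq> range (\<lambda>c. scal3 c (rep L))"
    proof
      fix x assume "x \<in> range (\<lambda>c. scal3 c (rep M))"
      then obtain c where x: "x = scal3 c (rep M)" by blast
      have "x = scal3 (c / l) (rep L)" using lnz by (simp add: x l scal3_eq scal_scal)
      thus "x \<in> range (\<lambda>c. scal3 c (rep L))" by blast
    qed
  qed
  thus ?thesis using rep[OF L] rep[OF M] by simp
qed

lemma locale_main: "chromatic_number (PG2_points :: ('a \<times> 'a \<times> 'a) set set) ER_adj \<le> 4 * s + 1"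
proof -
  let ?P = "PG2_points :: ('a \<times> 'a \<times> 'a) set set"
  obtain w where w: "w \<noteq> 0" "sg w = - w" using omega_ex by blast
  obtain i :: 'a where ii: "i * i = -1"
  proof -
    obtain z where z: "sg z = z" "z * z = -1 \<or> z * z = w * w * (-1)" using sq_or[OF w, of "-1"] by auto
    show ?thesis
    proof (cases "z * z = -1")
      case True thus ?thesis using that by blast
    next
      case False
      hence "z * z = w * w * (-1)" using z by blast
      hence "(z / w) * (z / w) = -1" using w by (simp add: field_simps)
      thus ?thesis using that by blast
    qed
  qed
  define h :: 'a where "h = inverse 2"
  have h: "h * 2 = 1" using two by (simp add: h_def)
  define Q where "Q L = Ti h i (rep L)" for L
  define K where "K = {x::'a. sg x = x}"
  have finK: "finite K" by simp
  have cK: "card K \<le> s" using card_K by (simp add: K_def)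
  obtain code where code: "bij_betw code K {0..<card K}" using ex_bij_betw_finite_nat[OF finK] by blast
  have inj_code: "inj_on code K" using code by (simp add: bij_betw_def)
  define tk where "tk j = the_inv_into K code j" for j
  have tk_code: "t \<in> K \<Longrightarrow> tk (code t) = t" for t by (simp add: tk_def the_inv_into_f_f[OF inj_code])
  have code_lt: "t \<in> K \<Longrightarrow> code t < card K" for t using code by (auto simp: bij_betw_def)
  define dk where "dk k = (if k < s then 1 else w)" for k
  define ck where "ck k = (if k < s then w * tk k else tk (k - s))" for k
  define mem where "mem k L \<longleftrightarrow> k < 2 * s \<and> inS (dk k) (ck k) (Q L)" for k L
  have dk_nz: "dk k \<noteq> 0" for k using w by (simp add: dk_def)
  have QTm: "Tm i (Q L) = rep L" for L by (simp add: Q_def Tm_Ti[OF ii h])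
  have BfQ: "Bf (Q L) (Q M) = dt (rep L) (rep M)" for L M by (simp add: Q_def Bf_Ti[OF ii h])
  have Qnz: "L \<in> ?P \<Longrightarrow> Q L \<noteq> (0,0,0)" for L
    using rep QTm Tm_zero by metis
  have match: "M1 = M2" if "L \<in> ?P" "M1 \<in> ?P" "M2 \<in> ?P" "mem k L" "mem k M1" "mem k M2"
     "ER_adj L M1" "ER_adj L M2" for L M1 M2 k
  proof -
    have "cross3 (Q M1) (Q M2) = (0,0,0)"
    proof (rule S_match[OF dk_nz])
      show "inS (dk k) (ck k) (Q L)" "inS (dk k) (ck k) (Q M1)" "inS (dk k) (ck k) (Q M2)"
        using that by (auto simp: mem_def)
      show "Bf (Q L) (Q M1) = 0" "Bf (Q L) (Q M2) = 0" using that adj_dot BfQ by auto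
      show "Q L \<noteq> (0,0,0)" using Qnz that by auto
    qed
    hence "cross3 (Tm i (Q M1)) (Tm i (Q M2)) = (0,0,0)" by (rule cross_lin[OF Tm_scal])
    hence "cross3 (rep M1) (rep M2) = (0,0,0)" by (simp add: QTm)
    thus ?thesis using cross_eq that by blast
  qed
  have uncov: "fst (Q L) = 0 \<and> fst (snd (Q L)) \<noteq> 0" if L: "L \<in> ?P" and nm: "\<not> (\<exists>k. mem k L)" for L
  proof -
    obtain a b g where QL: "Q L = (a, b, g)" by (cases "Q L") auto
    have "a = 0"
    proof (rule ccontr)
      assume a: "a \<noteq> 0"
      obtain t where t: "sg t = t" "inS 1 (w * t) (a, b, g) \<or> inS w t (a, b, g)" using cover[OF w a] by blast
      have tK: "t \<in> K" using t by (simp add: K_def)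
      from t(2) show False
      proof
        assume "inS 1 (w * t) (a, b, g)"
        moreover have "code t < s" using code_lt[OF tK] cK by simp
        ultimately have "mem (code t) L" using tk_code[OF tK] s3
          by (simp add: mem_def dk_def ck_def QL)
        thus False using nm by blast
      next
        assume "inS w t (a, b, g)"
        moreover have "code t < s" using code_lt[OF tK] cK by simp
        ultimately have "mem (s + code t) L" using tk_code[OF tK]
          by (simp add: mem_def dk_def ck_def QL)
        thus False using nm by blast
      qed
    qed
    moreover have "b \<noteq> 0"
    proof
      assume "b = 0"
      hence "mem 0 L" using `a = 0` s3 by (simp add: mem_def QL cover0)
      thus False using nm by blast
    qed
    ultimately show ?thesis by (simp add: QL)
  qed
  have finP: "finite ?P" by (rule finite_subset[of _ UNIV]) auto
  obtain f :: "('a \<times> 'a \<times> 'a) set \<Rightarrow> nat" where f: "inj_on f ?P"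
    using finite_imp_inj_to_nat_seg[OF finP] by blast
  define bit where "bit k L \<longleftrightarrow> (\<exists>M\<in>?P. ER_adj L M \<and> mem k M \<and> f M < f L)" for k L
  define kk where "kk L = (LEAST k. mem k L)" for L
  define col where "col L = (if \<exists>k. mem k L then 2 * kk L + (if bit (kk L) L then 1 else 0) else 4 * s)" for L
  have memkk: "mem (kk L) L" if "\<exists>k. mem k L" for L
    unfolding kk_def using that by (rule LeastI_ex)
  have bound: "col L < 4 * s + 1" for L
  proof (cases "\<exists>k. mem k L")
    case True
    hence "kk L < 2 * s" using memkk by (simp add: mem_def)
    thus ?thesis using True by (simp add: col_def)
  next
    case False thus ?thesis by (simp add: col_def)
  qed
  have proper: "col L \<noteq> col M" if L: "L \<in> ?P" and M: "M \<in> ?P" and LM: "ER_adj L M" for L M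
  proof
    assume eq: "col L = col M"
    have LneM: "L \<noteq> M" using LM by (simp add: ER_adj_def)
    show False
    proof (cases "\<exists>k. mem k L")
      case cL: True
      show False
      proof (cases "\<exists>k. mem k M")
        case cM: True
        define k where "k = kk L"
        have "2 * kk L + (if bit (kk L) L then 1 else 0) = 2 * kk M + (if bit (kk M) M then 1 else 0)"
          using eq cL cM by (simp add: col_def)
        hence kk: "kk M = k" and bb0: "bit (kk L) L = bit (kk M) M" unfolding k_def by (auto split: if_splits; presburger)+
        have bb: "bit k L = bit k M" using bb0 kk by (simp add: k_def)
        have mL: "mem k L" using memkk[OF cL] by (simp add: k_def)
        have mM: "mem k M" using memkk[OF cM] kk by simp
        have b1: "bit k L \<Longrightarrow> f M < f L"
        proof -
          assume "bit k L"
          then obtain M' where M': "M' \<in> ?P" "ER_adj L M'" "mem k M'" "f M' < f L" by (auto simp: bit_def)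
          have "M' = M" using match[OF L M' (1) M mL M'(3) mM M'(2) LM] .
          thus ?thesis using M' by simp
        qed
        have b2: "bit k M \<Longrightarrow> f L < f M"
        proof -
          assume "bit k M"
          then obtain L' where L': "L' \<in> ?P" "ER_adj M L'" "mem k L'" "f L' < f M" by (auto simp: bit_def)
          have "L' = L" using match[OF M L' (1) L mM L'(3) mL L'(2) ER_adj_sym[OF LM]] .
          thus ?thesis using L' by simp
        qed
        have "f L \<noteq> f M" using f L M LneM by (meson inj_onD)
        hence "f M < f L \<or> f L < f M" by auto
        thus False
        proof
          assume "f M < f L"
          hence "bit k L" using M LM mM by (auto simp: bit_def)
          thus False using bb b1 b2 by auto
        next
          assume "f L < f M"
          hence "bit k M" using L ER_adj_sym[OF LM] mL by (auto simp: bit_def)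
          thus False using bb b1 b2 by auto
        qed
      next
        case cM: False
        have "kk L < 2 * s" using memkk[OF cL] by (simp add: mem_def)
        hence "col L < 4 * s" using cL by (simp add: col_def)
        moreover have "col M = 4 * s" using cM by (simp add: col_def)
        ultimately show False using eq by simp
      qed
    next
      case cL: False
      show False
      proof (cases "\<exists>k. mem k M")
        case cM: True
        have "kk M < 2 * s" using memkk[OF cM] by (simp add: mem_def)
        hence "col M < 4 * s" using cM by (simp add: col_def)
        moreover have "col L = 4 * s" using cL by (simp add: col_def)
        ultimately show False using eq by simp
      next
        case cM: False
        obtain a b g where QL: "Q L = (a, b, g)" by (cases "Q L") auto
        obtain a' b' g' where QM: "Q M = (a', b', g')" by (cases "Q M") auto
        have "a = 0" "b \<noteq> 0" using uncov[OF L cL] QL by auto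
        moreover have "a' = 0" "b' \<noteq> 0" using uncov[OF M cM] QM by auto
        moreover have "Bf (Q L) (Q M) = 0" using BfQ adj_dot[OF LM L M] by simp
        ultimately show False using QL QM by simp
      qed
    qed
  qed
  show ?thesis unfolding chromatic_number_def
    by (rule Least_le) (use bound proper in blast)
qed

end

theorem mainTheorem2:
  fixes p r :: nat
  assumes "prime p" and "odd p" and "r \<ge> 1"
    and "card (UNIV :: ('a::{field, finite}) set) = p ^ (2 * r)"
  shows "real (chromatic_number (PG2_points :: ('a \<times> 'a \<times> 'a) set set) ER_adj)
           \<le> 4 * sqrt (real (card (UNIV :: 'a set))) + 1"
proof -
  define s where "s = p ^ r"
  have p2: "p \<ge> 2" using assms(1) by (simp add: prime_ge_2_nat)
  have p3: "p \<ge> 3"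
  proof (rule ccontr)
    assume "\<not> p \<ge> 3"
    hence "p = 2" using p2 by simp
    thus False using assms(2) by simp
  qed
  have "p ^ 1 \<le> p ^ r" using assms(3) p2 by (intro power_increasing) auto
  hence s3: "3 \<le> s" using p3 by (simp add: s_def)
  have cardq: "card (UNIV :: 'a set) = s * s"
  proof -
    have "p ^ (2 * r) = p ^ r * p ^ r" by (metis mult_2 power_add)
    thus ?thesis using assms(4) by (simp add: s_def)
  qed
  have cpos: "CHAR('a) > 0" by (rule finite_imp_CHAR_pos) simp
  have cprime: "prime CHAR('a)" by (rule prime_CHAR_semidom[OF cpos])
  have "CHAR('a) dvd card (UNIV :: 'a set)" by (rule CHAR_dvd_CARD)
  hence "CHAR('a) dvd p ^ (2 * r)" using assms(4) by simp
  hence "CHAR('a) dvd p" using cprime prime_dvd_power by blast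
  hence cp: "CHAR('a) = p" using cprime assms(1) primes_dvd_imp_eq by blast
  have fd: "(x + y) ^ s = x ^ s + y ^ s" for x y :: 'a
    by (rule freshmans_dream') (use cprime cp in \<open>simp_all add: s_def\<close>)
  have invol: "(x ^ s) ^ s = x" for x :: 'a
    using fermat_ff[of x] cardq by (simp add: power_mult[symmetric])
  have two: "(2::'a) \<noteq> 0"
  proof
    assume "(2::'a) = 0"
    hence "of_nat 2 = (0::'a)" by simp
    hence "CHAR('a) dvd 2" by (simp only: of_nat_eq_0_iff_char_dvd)
    hence "p \<le> 2" using cp by (simp add: dvd_imp_le)
    thus False using p3 by simp
  qed
  interpret ffq s "\<lambda>x::'a. x ^ s"
    by unfold_locales (use fd invol two cardq s3 in auto)
  have cn: "chromatic_number (PG2_points :: ('a \<times> 'a \<times> 'a) set set) ER_adj \<le> 4 * s + 1"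
    by (rule locale_main)
  have "sqrt (real (card (UNIV :: 'a set))) = real s"
    using cardq by (simp add: real_sqrt_mult)
  thus ?thesis using cn by (simp add: of_nat_mono)
qed

end
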